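(* Let $G$ be a graph on $n$ vertices and $A\in\mathcal{S}(G)$ a matrix with the SAP and $\operatorname{pin}(A)=(a,b)$ where $a+b<n$. Then each of the partial inertias $(a+1,b)$ and $(a,b+1)$ is attained by some matrix $A'\in\mathcal{S}(G)$ with the SAP.
   Context: For a graph $G$ on vertex set $\{1,\ldots,n\}$, $\mathcal{S}(G)$ is the set of real symmetric $n\times n$ matrices whose $(i,j)$-entry for $i\neq j$ is nonzero if and only if $\{i,j\}$ is an edge (diagonal entries arbitrary). The partial inertia of a symmetric matrix is $\operatorname{pin}(A)=(n_+(A),n_-(A))$, the numbers of positive and negative eigenvalues. $\circ$ is the entrywise product. A symmetric matrix $A$ has the strong Arnol'd property (SAP) if $X=O$ is the only real symmetric matrix with $A\circ X=O$, $I\circ X=O$, $AX=O$. *)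

theory Defs
  imports "Jordan_Normal_Form.Char_Poly"
begin

text \<open>Graphs on vertex set {0..<n} (0-indexed instead of 1..n), given by an edge
predicate E that is symmetric and loopless on the vertex set.\<close>

definition simple_graph_on :: "nat \<Rightarrow> (nat \<Rightarrow> nat \<Rightarrow> bool) \<Rightarrow> bool" where
  "simple_graph_on n E \<longleftrightarrow>
     (\<forall>i<n. \<forall>j<n. E i j \<longleftrightarrow> E j i) \<and> (\<forall>i<n. \<not> E i i)"

definition sym_mat :: "nat \<Rightarrow> real mat \<Rightarrow> bool" where
  "sym_mat n A \<longleftrightarrow> A \<in> carrier_mat n n \<and> transpose_mat A = A"

definition S_G :: "nat \<Rightarrow> (nat \<Rightarrow> nat \<Rightarrow> bool) \<Rightarrow> real mat set" where
  "S_G n E = {A. sym_mat n A \<and>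
      (\<forall>i<n. \<forall>j<n. i \<noteq> j \<longrightarrow> (A $$ (i,j) \<noteq> 0 \<longleftrightarrow> E i j))}"

definition hadamard :: "real mat \<Rightarrow> real mat \<Rightarrow> real mat" (infixl "\<circ>\<^sub>H" 70) where
  "A \<circ>\<^sub>H B = mat (dim_row A) (dim_col A) (\<lambda>(i,j). A $$ (i,j) * B $$ (i,j))"

definition n_plus :: "real mat \<Rightarrow> nat" where
  "n_plus A = (\<Sum>x\<in>{x. poly (char_poly A) x = 0 \<and> x > 0}. order x (char_poly A))"

definition n_minus :: "real mat \<Rightarrow> nat" where
  "n_minus A = (\<Sum>x\<in>{x. poly (char_poly A) x = 0 \<and> x < 0}. order x (char_poly A))"

definition pin :: "real mat \<Rightarrow> nat \<times> nat" where
  "pin A = (n_plus A, n_minus A)"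

definition SAP :: "nat \<Rightarrow> real mat \<Rightarrow> bool" where
  "SAP n A \<longleftrightarrow> (\<forall>X. sym_mat n X \<and> A \<circ>\<^sub>H X = 0\<^sub>m n n \<and> 1\<^sub>m n \<circ>\<^sub>H X = 0\<^sub>m n n
                     \<and> A * X = 0\<^sub>m n n \<longrightarrow> X = 0\<^sub>m n n)"

end

theory Submission
  imports Defs
begin


lemma linalg:
  fixes g :: "'b \<Rightarrow> 'a \<Rightarrow> real" and S :: "'b set" and J :: "'a set"
  assumes "finite S" "finite J" "card S < card J"
  shows "\<exists>c. (\<exists>j\<in>J. c j \<noteq> 0) \<and> (\<forall>l\<in>S. (\<Sum>j\<in>J. g l j * c j) = 0)"
  using assms
proof (induction S arbitrary: J g rule: finite_induct)
  case empty
  then obtain j where "j \<in> J" by fastforce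
  then show ?case by (intro exI[of _ "\<lambda>x. if x = j then 1 else 0"]) auto
next
  case (insert l S J g)
  show ?case
  proof (cases "\<forall>j\<in>J. g l j = 0")
    case True
    from insert.IH[of J g] insert.prems obtain c where
      c: "\<exists>j\<in>J. c j \<noteq> 0" "\<forall>l\<in>S. (\<Sum>j\<in>J. g l j * c j) = 0"
      using insert.hyps by auto
    show ?thesis using c True by (intro exI[of _ c]) auto
  next
    case False
    then obtain j1 where j1: "j1 \<in> J" "g l j1 \<noteq> 0" by auto
    define J' where "J' = J - {j1}"
    define g' where "g' = (\<lambda>l' j. g l' j - g l' j1 * g l j / g l j1)"
    have cJ': "card S < card J'" using insert.prems insert.hyps j1 unfolding J'_def
      by (simp add: card_Diff_singleton)
    have fJ': "finite J'" using insert.prems unfolding J'_def by auto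
    from insert.IH[OF fJ' cJ', of g'] obtain c' where
      c': "\<exists>j\<in>J'. c' j \<noteq> 0" "\<forall>l'\<in>S. (\<Sum>j\<in>J'. g' l' j * c' j) = 0" by auto
    define c where "c = c'(j1 := - (\<Sum>j\<in>J'. g l j * c' j) / g l j1)"
    have sumJ: "(\<Sum>j\<in>J. f j * c j) = f j1 * c j1 + (\<Sum>j\<in>J'. f j * c' j)" for f
    proof -
      have "(\<Sum>j\<in>J. f j * c j) = f j1 * c j1 + (\<Sum>j\<in>J'. f j * c j)"
        unfolding J'_def using j1 insert.prems by (simp add: sum.remove)
      also have "(\<Sum>j\<in>J'. f j * c j) = (\<Sum>j\<in>J'. f j * c' j)"
        by (rule sum.cong) (auto simp: c_def J'_def)
      finally show ?thesis .
    qed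
    have "\<exists>j\<in>J. c j \<noteq> 0" using c' by (auto simp: c_def J'_def)
    moreover have "(\<Sum>j\<in>J. g l j * c j) = 0"
      unfolding sumJ using j1 by (simp add: c_def)
    moreover have "(\<Sum>j\<in>J. g l' j * c j) = 0" if l': "l' \<in> S" for l'
    proof -
      have "(\<Sum>j\<in>J'. g' l' j * c' j) = (\<Sum>j\<in>J'. g l' j * c' j) - g l' j1 / g l j1 * (\<Sum>j\<in>J'. g l j * c' j)"
        unfolding g'_def by (simp add: sum_subtractf sum_distrib_left algebra_simps)
      with c'(2) l' have "(\<Sum>j\<in>J'. g l' j * c' j) = g l' j1 / g l j1 * (\<Sum>j\<in>J'. g l j * c' j)" by auto
      then show ?thesis unfolding sumJ using j1 by (simp add: c_def field_simps)
    qed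
    ultimately show ?thesis by (intro exI[of _ c]) auto
  qed
qed



lemma sum_swap_w:
  fixes R :: "nat \<Rightarrow> nat \<Rightarrow> real"
  shows "(\<Sum>r<n. R r l * (\<Sum>j\<in>J. c j * u j r)) = (\<Sum>j\<in>J. (\<Sum>r<n. R r l * u j r) * c j)"
proof -
  have "(\<Sum>r<n. R r l * (\<Sum>j\<in>J. c j * u j r)) = (\<Sum>r<n. \<Sum>j\<in>J. R r l * u j r * c j)"
    by (simp add: sum_distrib_left mult_ac)
  also have "\<dots> = (\<Sum>j\<in>J. \<Sum>r<n. R r l * u j r * c j)" by (rule sum.swap)
  also have "\<dots> = (\<Sum>j\<in>J. (\<Sum>r<n. R r l * u j r) * c j)" by (simp add: sum_distrib_right)
  finally show ?thesis .
qed

lemma key_low: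
  fixes R :: "nat \<Rightarrow> nat \<Rightarrow> real" and \<mu> :: "nat \<Rightarrow> real"
  assumes fJ: "finite J"
    and pos: "\<And>c. (\<exists>j\<in>J. c j \<noteq> 0) \<Longrightarrow>
       (\<Sum>l<n. \<mu> l * (\<Sum>r<n. R r l * (\<Sum>j\<in>J. c j * u j r))^2) > 0"
  shows "card J \<le> card {l. l < n \<and> \<mu> l > 0}"
proof (rule ccontr)
  assume "\<not> ?thesis"
  hence lt: "card {l. l < n \<and> \<mu> l > 0} < card J" by simp
  have fS: "finite {l. l < n \<and> \<mu> l > 0}" by auto
  from linalg[OF fS fJ lt, of "\<lambda>l j. (\<Sum>r<n. R r l * u j r)"] obtain c where
    c: "\<exists>j\<in>J. c j \<noteq> 0" "\<forall>l\<in>{l. l < n \<and> \<mu> l > 0}. (\<Sum>j\<in>J. (\<Sum>r<n. R r l * u j r) * c j) = 0"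
    by auto
  have "(\<Sum>l<n. \<mu> l * (\<Sum>r<n. R r l * (\<Sum>j\<in>J. c j * u j r))^2) \<le> 0"
  proof (rule sum_nonpos)
    fix l assume l: "l \<in> {..<n}"
    show "\<mu> l * (\<Sum>r<n. R r l * (\<Sum>j\<in>J. c j * u j r))^2 \<le> 0"
    proof (cases "\<mu> l > 0")
      case True
      then show ?thesis using c(2) l unfolding sum_swap_w by auto
    next
      case False
      then show ?thesis by (simp add: mult_nonpos_nonneg)
    qed
  qed
  with pos[OF c(1)] show False by simp
qed

lemma key_up:
  fixes R :: "nat \<Rightarrow> nat \<Rightarrow> real" and \<mu> :: "nat \<Rightarrow> real"
  assumes fJ: "finite J"
    and orth: "\<And>r r'. r < n \<Longrightarrow> r' < n \<Longrightarrow> (\<Sum>l<n. R r l * R r' l) = (if r = r' then 1 else 0)"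
    and nz: "\<And>c. (\<exists>j\<in>J. c j \<noteq> 0) \<Longrightarrow> \<exists>r<n. (\<Sum>j\<in>J. c j * u j r) \<noteq> 0"
    and np: "\<And>c. (\<Sum>l<n. \<mu> l * (\<Sum>r<n. R r l * (\<Sum>j\<in>J. c j * u j r))^2) \<le> 0"
  shows "card {l. l < n \<and> \<mu> l > 0} + card J \<le> n"
proof (rule ccontr)
  assume "\<not> ?thesis"
  hence lt0: "card {l. l < n \<and> \<mu> l > 0} + card J > n" by simp
  let ?S = "{l. l < n \<and> \<not> \<mu> l > 0}"
  have "card ?S + card {l. l < n \<and> \<mu> l > 0} = n"
  proof -
    have "card ?S + card {l. l < n \<and> \<mu> l > 0} = card (?S \<union> {l. l < n \<and> \<mu> l > 0})"
      by (rule card_Un_disjoint[symmetric]) auto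
    also have "?S \<union> {l. l < n \<and> \<mu> l > 0} = {..<n}" by auto
    finally show ?thesis by simp
  qed
  with lt0 have lt: "card ?S < card J" by simp
  have fS: "finite ?S" by auto
  from linalg[OF fS fJ lt, of "\<lambda>l j. (\<Sum>r<n. R r l * u j r)"] obtain c where
    c: "\<exists>j\<in>J. c j \<noteq> 0" "\<forall>l\<in>?S. (\<Sum>j\<in>J. (\<Sum>r<n. R r l * u j r) * c j) = 0"
    by auto
  define x where "x = (\<lambda>r. \<Sum>j\<in>J. c j * u j r)"
  define w where "w = (\<lambda>l. \<Sum>r<n. R r l * x r)"
  from nz[OF c(1)] obtain r0 where r0: "r0 < n" "x r0 \<noteq> 0" unfolding x_def by auto
  have w0: "w l = 0" if "l < n" "\<not> \<mu> l > 0" for l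
    using c(2) that unfolding w_def x_def sum_swap_w by auto
  have "x r0 = (\<Sum>l<n. R r0 l * w l)"
  proof -
    have "(\<Sum>l<n. R r0 l * w l) = (\<Sum>l<n. \<Sum>r<n. R r0 l * R r l * x r)"
      unfolding w_def by (simp add: sum_distrib_left mult_ac)
    also have "\<dots> = (\<Sum>r<n. \<Sum>l<n. R r0 l * R r l * x r)" by (rule sum.swap)
    also have "\<dots> = (\<Sum>r<n. (\<Sum>l<n. R r0 l * R r l) * x r)" by (simp add: sum_distrib_right)
    also have "\<dots> = (\<Sum>r<n. (if r0 = r then x r else 0))"
      by (rule sum.cong) (auto simp: orth r0)
    also have "\<dots> = x r0" using r0 by simp
    finally show ?thesis by simp
  qed
  with r0 obtain l where l: "l < n" "w l \<noteq> 0" by (metis (no_types, lifting) mult_zero_right sum.neutral lessThan_iff)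
  with w0 have ml: "\<mu> l > 0" by force
  have "(\<Sum>l<n. \<mu> l * (w l)^2) > 0"
  proof (rule sum_pos2[of "{..<n}" l])
    show "\<mu> l * (w l)^2 > 0" using ml l by simp
    fix i assume "i \<in> {..<n}"
    then show "\<mu> i * (w i)^2 \<ge> 0" using w0[of i] by (cases "\<mu> i > 0") auto
  qed (use l in auto)
  with np[of c] show False unfolding w_def x_def by simp
qed



definition diag_m :: "nat \<Rightarrow> (nat \<Rightarrow> real) \<Rightarrow> real mat" where
  "diag_m n \<mu> = mat n n (\<lambda>(r,c). if r = c then \<mu> r else 0)"

definition ortho :: "nat \<Rightarrow> real mat \<Rightarrow> bool" where
  "ortho n R \<longleftrightarrow> R \<in> carrier_mat n n \<and> transpose_mat R * R = 1\<^sub>m n \<and> R * transpose_mat R = 1\<^sub>m n"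

definition spec :: "nat \<Rightarrow> real mat \<Rightarrow> real mat \<Rightarrow> (nat \<Rightarrow> real) \<Rightarrow> bool" where
  "spec n A R \<mu> \<longleftrightarrow> ortho n R \<and> A = R * diag_m n \<mu> * transpose_mat R"

definition lp :: "nat \<Rightarrow> (nat \<Rightarrow> real) \<Rightarrow> real poly" where
  "lp n \<mu> = (\<Prod>a \<leftarrow> map \<mu> [0..<n]. [:- a, 1:])"

lemma lp_Suc: "lp (Suc n) \<mu> = lp n \<mu> * [:- \<mu> n, 1:]"
  unfolding lp_def by simp

lemma lp_nz: "lp n \<mu> \<noteq> 0"
proof (induction n)
  case 0 then show ?case by (simp add: lp_def)
next
  case (Suc n)
  have "[:- \<mu> n, 1:] \<noteq> 0" by simp
  with Suc show ?case unfolding lp_Suc by (simp only: mult_eq_0_iff) simp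
qed

lemma lp_root: "poly (lp n \<mu>) x = 0 \<longleftrightarrow> (\<exists>l<n. \<mu> l = x)"
proof (induction n)
  case 0 then show ?case by (simp add: lp_def)
next
  case (Suc n)
  show ?case unfolding lp_Suc using Suc by (auto simp: less_Suc_eq)
qed

lemma order_lin: "order x [:- a, 1:] = (if x = a then 1 else 0)"
proof (cases "x = a")
  case True
  then show ?thesis using order_power_n_n[of a 1] by simp
next
  case False
  then show ?thesis by (simp add: order_0I)
qed

lemma lp_order: "order x (lp n \<mu>) = card {l. l < n \<and> \<mu> l = x}"
proof (induction n)
  case 0 then show ?case by (simp add: lp_def)
next
  case (Suc n)
  have "order x (lp (Suc n) \<mu>) = order x (lp n \<mu>) + order x [:- \<mu> n, 1:]"
    unfolding lp_Suc by (rule order_mult) (use lp_nz[of "Suc n" \<mu>] in \<open>simp add: lp_Suc\<close>)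
  also have "\<dots> = card {l. l < n \<and> \<mu> l = x} + (if \<mu> n = x then 1 else 0)"
    using Suc by (simp add: order_lin)
  also have "\<dots> = card {l. l < Suc n \<and> \<mu> l = x}"
  proof (cases "\<mu> n = x")
    case True
    have "{l. l < Suc n \<and> \<mu> l = x} = insert n {l. l < n \<and> \<mu> l = x}" using True by (auto simp: less_Suc_eq)
    then show ?thesis using True by simp
  next
    case False
    have "{l. l < Suc n \<and> \<mu> l = x} = {l. l < n \<and> \<mu> l = x}" using False by (auto simp: less_Suc_eq)
    then show ?thesis using False by simp
  qed
  finally show ?case .
qed

lemma lp_count:
  assumes P: "\<And>x. Q x \<Longrightarrow> x \<noteq> 0 \<or> True"
  shows "(\<Sum>x\<in>{x. poly (lp n \<mu>) x = 0 \<and> Q x}. order x (lp n \<mu>)) = card {l. l < n \<and> Q (\<mu> l)}"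
proof -
  let ?X = "\<mu> ` {l. l < n \<and> Q (\<mu> l)}"
  have X: "{x. poly (lp n \<mu>) x = 0 \<and> Q x} = ?X" unfolding lp_root by auto
  have "(\<Sum>x\<in>?X. order x (lp n \<mu>)) = (\<Sum>x\<in>?X. card {l. l < n \<and> \<mu> l = x})"
    by (simp add: lp_order)
  also have "\<dots> = card (\<Union>x\<in>?X. {l. l < n \<and> \<mu> l = x})"
    by (rule card_UN_disjoint[symmetric]) auto
  also have "(\<Union>x\<in>?X. {l. l < n \<and> \<mu> l = x}) = {l. l < n \<and> Q (\<mu> l)}" by auto
  finally show ?thesis unfolding X .
qed

lemma spec_char_poly:
  assumes "spec n A R \<mu>"
  shows "char_poly A = lp n \<mu>"
proof -
  from assms have R: "R \<in> carrier_mat n n" and RR: "transpose_mat R * R = 1\<^sub>m n" "R * transpose_mat R = 1\<^sub>m n"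
    and A: "A = R * diag_m n \<mu> * transpose_mat R"
    unfolding spec_def ortho_def by auto
  have D: "diag_m n \<mu> \<in> carrier_mat n n" unfolding diag_m_def by auto
  have "similar_mat_wit A (diag_m n \<mu>) R (transpose_mat R)"
    unfolding similar_mat_wit_def Let_def using R RR A D by auto
  hence "similar_mat A (diag_m n \<mu>)" unfolding similar_mat_def by blast
  hence "char_poly A = char_poly (diag_m n \<mu>)" by (rule char_poly_similar)
  also have "\<dots> = (\<Prod>a \<leftarrow> diag_mat (diag_m n \<mu>). [:- a, 1:])"
    by (rule char_poly_upper_triangular[OF D]) (auto simp: upper_triangular_def diag_m_def)
  also have "diag_mat (diag_m n \<mu>) = map \<mu> [0..<n]"
    unfolding diag_mat_def diag_m_def by (auto intro: nth_equalityI)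
  finally show ?thesis unfolding lp_def .
qed

lemma spec_n_plus: "spec n A R \<mu> \<Longrightarrow> n_plus A = card {l. l < n \<and> \<mu> l > 0}"
  unfolding n_plus_def using spec_char_poly[of n A R \<mu>] lp_count[of "\<lambda>x. x > 0" n \<mu>] by simp

lemma spec_n_minus: "spec n A R \<mu> \<Longrightarrow> n_minus A = card {l. l < n \<and> \<mu> l < 0}"
  unfolding n_minus_def using spec_char_poly[of n A R \<mu>] lp_count[of "\<lambda>x. x < 0" n \<mu>] by simp



lemma mult_entry:
  assumes "A \<in> carrier_mat n k" "B \<in> carrier_mat k m" "r < n" "c < m"
  shows "(A * B) $$ (r,c) = (\<Sum>l<k. A $$ (r,l) * B $$ (l,c))"
  using assms by (simp add: scalar_prod_def atLeast0LessThan)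

lemma real_eig:
  fixes A :: "real mat"
  assumes A: "A \<in> carrier_mat n n" and sym: "\<And>r c. r < n \<Longrightarrow> c < n \<Longrightarrow> A $$ (r,c) = A $$ (c,r)"
    and n: "n > 0"
  shows "\<exists>lam v. (\<exists>r<n. v r \<noteq> 0) \<and> (\<forall>r<n. (\<Sum>c<n. A $$ (r,c) * v c) = lam * v r)"
proof -
  define Ac where "Ac = map_mat complex_of_real A"
  have Ac: "Ac \<in> carrier_mat n n" using A unfolding Ac_def by auto
  have "degree (char_poly Ac) = n" using degree_monic_char_poly[OF Ac] by simp
  hence "\<not> constant (poly (char_poly Ac))" using n by (simp add: constant_degree)
  from fundamental_theorem_of_algebra[OF this] obtain z where "poly (char_poly Ac) z = 0" by auto
  hence "eigenvalue Ac z" using eigenvalue_root_char_poly[OF Ac] by simp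
  then obtain w where ev: "eigenvector Ac w z" unfolding eigenvalue_def by auto
  hence w: "w \<in> carrier_vec n" "w \<noteq> 0\<^sub>v n" "Ac *\<^sub>v w = z \<cdot>\<^sub>v w"
    unfolding eigenvector_def using Ac by auto
  have eq: "(\<Sum>c<n. complex_of_real (A $$ (r,c)) * w $ c) = z * w $ r" if r: "r < n" for r
  proof -
    have "(Ac *\<^sub>v w) $ r = z * w $ r" using w r by simp
    moreover have "(Ac *\<^sub>v w) $ r = (\<Sum>c<n. complex_of_real (A $$ (r,c)) * w $ c)"
      using r A w(1) Ac by (simp add: scalar_prod_def atLeast0LessThan Ac_def)
    ultimately show ?thesis by simp
  qed
  obtain r0 where r0: "r0 < n" "w $ r0 \<noteq> 0" using w(1,2) by (metis eq_vecI carrier_vecD index_zero_vec)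
  define N where "N = (\<Sum>r<n. cnj (w $ r) * w $ r)"
  define S where "S = (\<Sum>r<n. cnj (w $ r) * (\<Sum>c<n. complex_of_real (A $$ (r,c)) * w $ c))"
  have "S = (\<Sum>r<n. cnj (w $ r) * (z * w $ r))" unfolding S_def by (intro sum.cong refl) (simp add: eq)
  hence SN: "S = z * N" unfolding N_def by (simp add: sum_distrib_left mult_ac)
  have "cnj S = (\<Sum>r<n. \<Sum>c<n. w $ r * (complex_of_real (A $$ (r,c)) * cnj (w $ c)))"
    unfolding S_def by (simp add: sum_distrib_left)
  also have "\<dots> = (\<Sum>c<n. \<Sum>r<n. w $ r * (complex_of_real (A $$ (r,c)) * cnj (w $ c)))"
    by (rule sum.swap)
  also have "\<dots> = S" unfolding S_def sum_distrib_left
    by (intro sum.cong refl) (simp add: sym mult_ac)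
  finally have cS: "cnj S = S" .
  have NR: "N = complex_of_real (\<Sum>r<n. (cmod (w $ r))^2)"
    unfolding N_def of_real_sum by (intro sum.cong refl) (simp add: complex_norm_square mult.commute del: of_real_power)
  have "(\<Sum>r<n. (cmod (w $ r))^2) > 0"
    by (rule sum_pos2[of _ r0]) (use r0 in auto)
  hence N0: "N \<noteq> 0" unfolding NR by (metis less_irrefl of_real_eq_0_iff)
  have cN: "cnj N = N" unfolding NR by (rule complex_cnj_complex_of_real)
  have "cnj z * N = z * N" using cS SN cN by (metis complex_cnj_mult)
  hence cz: "cnj z = z" using N0 by simp
  hence Imz: "Im z = 0" by (metis Reals_cnj_iff complex_is_Real_iff)
  have re: "(\<Sum>c<n. A $$ (r,c) * Re (w $ c)) = Re z * Re (w $ r)" and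
       im: "(\<Sum>c<n. A $$ (r,c) * Im (w $ c)) = Re z * Im (w $ r)" if r: "r < n" for r
  proof -
    have "Re (\<Sum>c<n. complex_of_real (A $$ (r,c)) * w $ c) = (\<Sum>c<n. A $$ (r,c) * Re (w $ c))"
      by (simp add: Re_sum)
    moreover have "Im (\<Sum>c<n. complex_of_real (A $$ (r,c)) * w $ c) = (\<Sum>c<n. A $$ (r,c) * Im (w $ c))"
      by (simp add: Im_sum)
    ultimately show "(\<Sum>c<n. A $$ (r,c) * Re (w $ c)) = Re z * Re (w $ r)"
      "(\<Sum>c<n. A $$ (r,c) * Im (w $ c)) = Re z * Im (w $ r)"
      using eq[OF r] Imz by auto
  qed
  show ?thesis
  proof (cases "Re (w $ r0) = 0")
    case False
    then show ?thesis using re r0 by (intro exI[of _ "Re z"] exI[of _ "\<lambda>c. Re (w $ c)"]) auto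
  next
    case True
    hence "Im (w $ r0) \<noteq> 0" using r0 complex.expand by force
    then show ?thesis using im r0 by (intro exI[of _ "Re z"] exI[of _ "\<lambda>c. Im (w $ c)"]) auto
  qed
qed



lemma diag_entry:
  assumes R: "R \<in> carrier_mat n n" and r: "r < n" and c: "c < n"
  shows "(R * diag_m n \<mu> * transpose_mat R) $$ (r,c) = (\<Sum>l<n. R $$ (r,l) * \<mu> l * R $$ (c,l))"
proof -
  have D: "diag_m n \<mu> \<in> carrier_mat n n" unfolding diag_m_def by simp
  have RD: "(R * diag_m n \<mu>) $$ (r,l) = R $$ (r,l) * \<mu> l" if "r < n" "l < n" for r l
  proof -
    have "(R * diag_m n \<mu>) $$ (r,l) = (\<Sum>j<n. R $$ (r,j) * (if j = l then \<mu> j else 0))"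
      using mult_entry[OF R D that] that unfolding diag_m_def by simp
    also have "\<dots> = (\<Sum>j<n. (if j = l then R $$ (r,j) * \<mu> j else 0))"
      by (intro sum.cong refl) auto
    also have "\<dots> = R $$ (r,l) * \<mu> l" using that by simp
    finally show ?thesis .
  qed
  have "(R * diag_m n \<mu> * transpose_mat R) $$ (r,c) = (\<Sum>l<n. (R * diag_m n \<mu>) $$ (r,l) * transpose_mat R $$ (l,c))"
    by (rule mult_entry[OF mult_carrier_mat[OF R D] _ r c]) (use R in simp)
  also have "\<dots> = (\<Sum>l<n. R $$ (r,l) * \<mu> l * R $$ (c,l))"
    by (intro sum.cong refl) (use R r c RD in simp)
  finally show ?thesis .
qed

lemma tt_entry:
  assumes R: "R \<in> carrier_mat n n" and r: "l < n" and c: "l' < n"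
  shows "(transpose_mat R * R) $$ (l,l') = (\<Sum>r<n. R $$ (r,l) * R $$ (r,l'))"
  using mult_entry[of "transpose_mat R" n n R n l l'] assms by simp

lemma tt_entry2:
  assumes R: "R \<in> carrier_mat n n" and r: "r < n" and c: "r' < n"
  shows "(R * transpose_mat R) $$ (r,r') = (\<Sum>l<n. R $$ (r,l) * R $$ (r',l))"
  using mult_entry[of R n n "transpose_mat R" n r r'] assms by simp

lemma spec_entries:
  assumes "spec n A R \<mu>"
  shows "R \<in> carrier_mat n n" "A \<in> carrier_mat n n"
    "\<And>r c. r < n \<Longrightarrow> c < n \<Longrightarrow> A $$ (r,c) = (\<Sum>l<n. R $$ (r,l) * \<mu> l * R $$ (c,l))"
    "\<And>l l'. l < n \<Longrightarrow> l' < n \<Longrightarrow> (\<Sum>r<n. R $$ (r,l) * R $$ (r,l')) = (if l = l' then 1 else 0)"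
    "\<And>r r'. r < n \<Longrightarrow> r' < n \<Longrightarrow> (\<Sum>l<n. R $$ (r,l) * R $$ (r',l)) = (if r = r' then 1 else 0)"
proof -
  from assms have R: "R \<in> carrier_mat n n" and RR: "transpose_mat R * R = 1\<^sub>m n" "R * transpose_mat R = 1\<^sub>m n"
    and A: "A = R * diag_m n \<mu> * transpose_mat R"
    unfolding spec_def ortho_def by auto
  show "R \<in> carrier_mat n n" by fact
  have D: "diag_m n \<mu> \<in> carrier_mat n n" unfolding diag_m_def by simp
  show "A \<in> carrier_mat n n" unfolding A
    by (rule mult_carrier_mat[OF mult_carrier_mat[OF R D]]) (use R in simp)
  show "\<And>r c. r < n \<Longrightarrow> c < n \<Longrightarrow> A $$ (r,c) = (\<Sum>l<n. R $$ (r,l) * \<mu> l * R $$ (c,l))"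
    unfolding A by (rule diag_entry[OF R])
  show "\<And>l l'. l < n \<Longrightarrow> l' < n \<Longrightarrow> (\<Sum>r<n. R $$ (r,l) * R $$ (r,l')) = (if l = l' then 1 else 0)"
    using tt_entry[OF R] RR(1) by (metis index_one_mat(1))
  show "\<And>r r'. r < n \<Longrightarrow> r' < n \<Longrightarrow> (\<Sum>l<n. R $$ (r,l) * R $$ (r',l)) = (if r = r' then 1 else 0)"
    using tt_entry2[OF R] RR(2) by (metis index_one_mat(1))
qed



lemma sum_delta1: "r < (n::nat) \<Longrightarrow> (\<Sum>l<n. (if r = l then 1 else 0) * f l) = (f r :: real)"
proof -
  assume r: "r < n"
  have "(\<Sum>l<n. (if r = l then 1 else 0) * f l) = (\<Sum>l<n. if r = l then f l else 0)"
    by (intro sum.cong) auto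
  also have "\<dots> = f r" using r by (subst sum.delta') auto
  finally show ?thesis .
qed

lemma sum_delta2: "r < (n::nat) \<Longrightarrow> (\<Sum>l<n. f l * (if l = r then 1 else 0)) = (f r :: real)"
proof -
  assume r: "r < n"
  have "(\<Sum>l<n. f l * (if l = r then 1 else 0)) = (\<Sum>l<n. if r = l then f l else 0)"
    by (intro sum.cong) auto
  also have "\<dots> = f r" using r by (subst sum.delta') auto
  finally show ?thesis .
qed

lemma householder:
  fixes v :: "nat \<Rightarrow> real"
  assumes n: "n > 0" and v1: "(\<Sum>r<n. (v r)^2) = 1" and v0: "v 0 \<le> 0"
  shows "\<exists>H. H \<in> carrier_mat n n \<and> transpose_mat H = H \<and> H * H = 1\<^sub>m n \<and> (\<forall>r<n. H $$ (r,0) = v r)"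
proof -
  define t where "t = 1 - v 0"
  have t: "t \<ge> 1" using v0 unfolding t_def by simp
  define w where "w = (\<lambda>r. v r - (if r = 0 then 1 else 0))"
  have w2: "(\<Sum>r<n. (w r)^2) = 2 * t"
  proof -
    obtain m where m: "n = Suc m" using n by (cases n) auto
    have "(\<Sum>r<n. (w r)^2) = (v 0 - 1)^2 + (\<Sum>r<m. (v (Suc r))^2)"
      unfolding m sum.lessThan_Suc_shift w_def by simp
    moreover have "1 = (v 0)^2 + (\<Sum>r<m. (v (Suc r))^2)"
      using v1 unfolding m sum.lessThan_Suc_shift by simp
    ultimately show ?thesis unfolding t_def by (simp add: power2_eq_square algebra_simps)
  qed
  define H where "H = mat n n (\<lambda>(r,c). (if r = c then 1 else 0) - w r * w c / t)"
  have Hc: "H \<in> carrier_mat n n" unfolding H_def by simp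
  have HT: "transpose_mat H = H" unfolding H_def by (intro eq_matI) auto
  have HH: "H * H = 1\<^sub>m n"
  proof (intro eq_matI)
    fix r c assume r: "r < dim_row (1\<^sub>m n)" and c: "c < dim_col (1\<^sub>m n)"
    hence r: "r < n" and c: "c < n" by auto
    have "(H * H) $$ (r,c) = (\<Sum>l<n. H $$ (r,l) * H $$ (l,c))" by (rule mult_entry[OF Hc Hc r c])
    also have "\<dots> = (\<Sum>l<n. ((if r = l then 1 else 0) - w r * w l / t) * ((if l = c then 1 else 0) - w l * w c / t))"
      by (intro sum.cong refl) (simp add: H_def r c)
    also have "\<dots> = (\<Sum>l<n. (if r = l then 1 else 0) * (if l = c then 1 else 0)) - (\<Sum>l<n. (if r = l then 1 else 0) * (w l * w c / t))
       - (\<Sum>l<n. (w r * w l / t) * (if l = c then 1 else 0)) + (\<Sum>l<n. w r * w c / t^2 * (w l)^2)"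
    proof -
      have alg: "(x - a) * (y - b) = x * y - x * b - a * y + a * b" for x y a b :: real by (simp add: algebra_simps)
      have "(\<Sum>l<n. ((if r = l then 1 else 0) - w r * w l / t) * ((if l = c then 1 else 0) - w l * w c / t))
        = (\<Sum>l<n. (if r = l then 1 else 0) * (if l = c then 1 else 0) - (if r = l then 1 else 0) * (w l * w c / t)
             - (w r * w l / t) * (if l = c then 1 else 0) + w r * w c / t^2 * (w l)^2)"
        by (intro sum.cong refl) (simp only: alg power2_eq_square, simp)
      then show ?thesis by (simp add: sum.distrib sum_subtractf)
    qed
    also have "\<dots> = (if r = c then 1 else 0) - w r * w c / t - w r * w c / t + w r * w c / t^2 * (2 * t)"
    proof -
      have p1: "(\<Sum>l<n. (if r = l then 1 else 0) * (if l = c then 1 else 0)) = (if r = c then 1 else (0::real))"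
        by (rule sum_delta1[OF r])
      have p2: "(\<Sum>l<n. (if r = l then 1 else 0) * (w l * w c / t)) = w r * w c / t" by (rule sum_delta1[OF r])
      have p3: "(\<Sum>l<n. (w r * w l / t) * (if l = c then 1 else 0)) = w r * w c / t" by (rule sum_delta2[OF c])
      have p4: "(\<Sum>l<n. w r * w c / t^2 * (w l)^2) = w r * w c / t^2 * (2 * t)"
        by (simp only: sum_distrib_left[symmetric] w2)
      show ?thesis by (simp only: p1 p2 p3 p4)
    qed
    also have "\<dots> = (if r = c then 1 else 0)" using t by (simp add: power2_eq_square field_simps)
    finally show "(H * H) $$ (r,c) = 1\<^sub>m n $$ (r,c)" using r c by simp
  qed (auto simp: H_def)
  have Hv: "H $$ (r,0) = v r" if "r < n" for r
  proof -
    have "H $$ (r,0) = (if r = 0 then 1 else 0) - w r * (v 0 - 1) / t" using that n unfolding H_def w_def by simp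
    also have "\<dots> = (if r = 0 then 1 else 0) + w r" using t unfolding t_def by (simp add: field_simps)
    also have "\<dots> = v r" unfolding w_def by simp
    finally show ?thesis .
  qed
  show ?thesis using Hc HT HH Hv by blast
qed



lemma unit_eig:
  fixes A :: "real mat"
  assumes A: "A \<in> carrier_mat n n" and sym: "\<And>r c. r < n \<Longrightarrow> c < n \<Longrightarrow> A $$ (r,c) = A $$ (c,r)"
    and n: "n > 0"
  shows "\<exists>lam v. (\<Sum>r<n. (v r)^2) = 1 \<and> v 0 \<le> 0 \<and> (\<forall>r<n. (\<Sum>c<n. A $$ (r,c) * v c) = lam * v r)"
proof -
  from real_eig[OF A sym n] obtain lam u where u: "\<exists>r<n. u r \<noteq> 0"
    "\<forall>r<n. (\<Sum>c<n. A $$ (r,c) * u c) = lam * u r" by blast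
  define s where "s = sqrt (\<Sum>r<n. (u r)^2)"
  from u(1) obtain r0 where r0: "r0 < n" "u r0 \<noteq> 0" by auto
  have upos: "(\<Sum>r<n. (u r)^2) > 0" using r0 by (intro sum_pos2[of _ r0]) auto
  hence s: "s > 0" "s^2 = (\<Sum>r<n. (u r)^2)" unfolding s_def by auto
  define sg :: real where "sg = (if u 0 > 0 then -1 else 1)"
  have sg: "sg^2 = 1" unfolding sg_def by simp
  define v where "v = (\<lambda>r. sg * u r / s)"
  have "(\<Sum>r<n. (v r)^2) = (\<Sum>r<n. (u r)^2) * sg^2 / s^2"
  proof -
    have "(\<Sum>r<n. (v r)^2) = (\<Sum>r<n. (u r)^2 * (sg^2 / s^2))"
      unfolding v_def by (intro sum.cong refl) (simp add: power_mult_distrib power_divide)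
    also have "\<dots> = (\<Sum>r<n. (u r)^2) * (sg^2 / s^2)" by (rule sum_distrib_right[symmetric])
    finally show ?thesis by simp
  qed
  hence "(\<Sum>r<n. (v r)^2) = 1" using s sg upos by simp
  moreover have "v 0 \<le> 0" unfolding v_def sg_def using s
    by (auto simp: divide_nonpos_pos)
  moreover have "(\<Sum>c<n. A $$ (r,c) * v c) = lam * v r" if "r < n" for r
  proof -
    have "(\<Sum>c<n. A $$ (r,c) * v c) = sg / s * (\<Sum>c<n. A $$ (r,c) * u c)"
      unfolding v_def by (simp add: sum_distrib_left mult_ac)
    also have "\<dots> = lam * v r" using u(2) that unfolding v_def by simp
    finally show ?thesis .
  qed
  ultimately show ?thesis by blast
qed



theorem spectral:
  fixes A :: "real mat"
  assumes "A \<in> carrier_mat n n" and "\<And>r c. r < n \<Longrightarrow> c < n \<Longrightarrow> A $$ (r,c) = A $$ (c,r)"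
  shows "\<exists>R \<mu>. spec n A R \<mu>"
  using assms
proof (induction n arbitrary: A)
  case 0
  have "spec 0 A (1\<^sub>m 0) (\<lambda>_. 0)"
    unfolding spec_def ortho_def diag_m_def using 0 by (auto intro!: eq_matI)
  then show ?case by blast
next
  case (Suc m A)
  define n where "n = Suc m"
  have Ac: "A \<in> carrier_mat n n" and sym: "\<And>r c. r < n \<Longrightarrow> c < n \<Longrightarrow> A $$ (r,c) = A $$ (c,r)"
    using Suc.prems unfolding n_def by auto
  have n: "n > 0" unfolding n_def by simp
  from unit_eig[OF Ac sym n] obtain lam v where v: "(\<Sum>r<n. (v r)^2) = 1" "v 0 \<le> 0"
    "\<And>r. r < n \<Longrightarrow> (\<Sum>c<n. A $$ (r,c) * v c) = lam * v r" by blast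
  from householder[OF n v(1,2)] obtain H where Hc: "H \<in> carrier_mat n n" and HT: "transpose_mat H = H"
    and HH: "H * H = 1\<^sub>m n" and Hv: "\<And>r. r < n \<Longrightarrow> H $$ (r,0) = v r" by blast
  have AT: "transpose_mat A = A" using Ac sym by (intro eq_matI) auto
  define C where "C = H * A * H"
  have Cc: "C \<in> carrier_mat n n" unfolding C_def using Hc Ac by simp
  have CT: "transpose_mat C = C"
    unfolding C_def using Hc Ac HT AT
    by (simp add: transpose_mult[of _ n n _ n] assoc_mult_mat[of _ n n _ n _ n])
  have AH: "(A * H) $$ (p,0) = lam * H $$ (p,0)" if p: "p < n" for p
  proof -
    have "(A * H) $$ (p,0) = (\<Sum>q<n. A $$ (p,q) * H $$ (q,0))" by (rule mult_entry[OF Ac Hc p n])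
    also have "\<dots> = (\<Sum>q<n. A $$ (p,q) * v q)" by (intro sum.cong refl) (simp add: Hv)
    also have "\<dots> = lam * H $$ (p,0)" using v(3)[OF p] Hv[OF p] by simp
    finally show ?thesis .
  qed
  have C0: "C $$ (r,0) = (if r = 0 then lam else 0)" if r: "r < n" for r
  proof -
    have "C = H * (A * H)" unfolding C_def using Hc Ac by simp
    hence "C $$ (r,0) = (\<Sum>p<n. H $$ (r,p) * (A * H) $$ (p,0))"
      using mult_entry[OF Hc mult_carrier_mat[OF Ac Hc] r n] by simp
    also have "\<dots> = lam * (\<Sum>p<n. H $$ (r,p) * H $$ (p,0))"
      by (simp add: AH sum_distrib_left mult_ac)
    also have "(\<Sum>p<n. H $$ (r,p) * H $$ (p,0)) = (H * H) $$ (r,0)"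
      by (rule mult_entry[OF Hc Hc r n, symmetric])
    also have "\<dots> = (if r = 0 then 1 else 0)" using HH r n by simp
    finally show ?thesis by simp
  qed
  have Csym: "C $$ (r,c) = C $$ (c,r)" if "r < n" "c < n" for r c
    using CT that Cc by (metis carrier_matD(1,2) index_transpose_mat(1))
  define B where "B = mat m m (\<lambda>(r,c). C $$ (Suc r, Suc c))"
  have Bc: "B \<in> carrier_mat m m" unfolding B_def by simp
  have Bsym: "B $$ (r,c) = B $$ (c,r)" if "r < m" "c < m" for r c
    using that Csym[of "Suc r" "Suc c"] unfolding B_def n_def by simp
  from Suc.IH[OF Bc Bsym] obtain R1 \<mu>1 where sp1: "spec m B R1 \<mu>1" by blast
  note e1 = spec_entries[OF sp1]
  define R2 where "R2 = mat n n (\<lambda>(r,l). if r = 0 then (if l = 0 then 1 else 0)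
     else if l = 0 then 0 else R1 $$ (r - 1, l - 1))"
  define \<mu> where "\<mu> = (\<lambda>l. if l = 0 then lam else \<mu>1 (l - 1))"
  have R2c: "R2 \<in> carrier_mat n n" unfolding R2_def by simp
  have Dc: "diag_m n \<mu> \<in> carrier_mat n n" unfolding diag_m_def by simp
  have R2T: "transpose_mat R2 * R2 = 1\<^sub>m n"
  proof (intro eq_matI)
    fix l l' assume "l < dim_row (1\<^sub>m n)" "l' < dim_col (1\<^sub>m n)"
    hence l: "l < n" "l' < n" by auto
    have "(transpose_mat R2 * R2) $$ (l,l') = (\<Sum>r<n. R2 $$ (r,l) * R2 $$ (r,l'))"
      by (rule tt_entry[OF R2c l])
    also have "\<dots> = R2 $$ (0,l) * R2 $$ (0,l') + (\<Sum>r<m. R2 $$ (Suc r,l) * R2 $$ (Suc r,l'))"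
      unfolding n_def by (rule sum.lessThan_Suc_shift)
    also have "\<dots> = (if l = l' then 1 else 0)"
    proof (cases l)
      case 0
      then show ?thesis using l by (simp add: R2_def n_def)
    next
      case (Suc a)
      show ?thesis
      proof (cases l')
        case 0
        then show ?thesis using l Suc by (simp add: R2_def n_def)
      next
        case (Suc b)
        have "(\<Sum>r<m. R2 $$ (Suc r,l) * R2 $$ (Suc r,l')) = (\<Sum>r<m. R1 $$ (r,a) * R1 $$ (r,b))"
          by (intro sum.cong refl) (use l \<open>l = Suc a\<close> Suc in \<open>simp add: R2_def n_def\<close>)
        also have "\<dots> = (if a = b then 1 else 0)" using e1(4)[of a b] l \<open>l = Suc a\<close> Suc unfolding n_def by simp
        finally show ?thesis using l \<open>l = Suc a\<close> Suc by (simp add: R2_def n_def)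
      qed
    qed
    finally show "(transpose_mat R2 * R2) $$ (l,l') = 1\<^sub>m n $$ (l,l')" using l by simp
  qed (use R2c in auto)
  have R2T2: "R2 * transpose_mat R2 = 1\<^sub>m n"
  proof (intro eq_matI)
    fix l l' assume "l < dim_row (1\<^sub>m n)" "l' < dim_col (1\<^sub>m n)"
    hence l: "l < n" "l' < n" by auto
    have "(R2 * transpose_mat R2) $$ (l,l') = (\<Sum>r<n. R2 $$ (l,r) * R2 $$ (l',r))"
      by (rule tt_entry2[OF R2c l])
    also have "\<dots> = R2 $$ (l,0) * R2 $$ (l',0) + (\<Sum>r<m. R2 $$ (l,Suc r) * R2 $$ (l',Suc r))"
      unfolding n_def by (rule sum.lessThan_Suc_shift)
    also have "\<dots> = (if l = l' then 1 else 0)"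
    proof (cases l)
      case 0
      then show ?thesis using l by (simp add: R2_def n_def)
    next
      case (Suc a)
      show ?thesis
      proof (cases l')
        case 0
        then show ?thesis using l Suc by (simp add: R2_def n_def)
      next
        case (Suc b)
        have "(\<Sum>r<m. R2 $$ (l,Suc r) * R2 $$ (l',Suc r)) = (\<Sum>r<m. R1 $$ (a,r) * R1 $$ (b,r))"
          by (intro sum.cong refl) (use l \<open>l = Suc a\<close> Suc in \<open>simp add: R2_def n_def\<close>)
        also have "\<dots> = (if a = b then 1 else 0)" using e1(5)[of a b] l \<open>l = Suc a\<close> Suc unfolding n_def by simp
        finally show ?thesis using l \<open>l = Suc a\<close> Suc by (simp add: R2_def n_def)
      qed
    qed
    finally show "(R2 * transpose_mat R2) $$ (l,l') = 1\<^sub>m n $$ (l,l')" using l by simp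
  qed (use R2c in auto)
  have CR2: "C = R2 * diag_m n \<mu> * transpose_mat R2"
  proof (intro eq_matI)
    fix r c assume "r < dim_row (R2 * diag_m n \<mu> * transpose_mat R2)" "c < dim_col (R2 * diag_m n \<mu> * transpose_mat R2)"
    hence rc: "r < n" "c < n" using R2c by auto
    have "(R2 * diag_m n \<mu> * transpose_mat R2) $$ (r,c) = (\<Sum>l<n. R2 $$ (r,l) * \<mu> l * R2 $$ (c,l))"
      by (rule diag_entry[OF R2c rc])
    also have "\<dots> = R2 $$ (r,0) * \<mu> 0 * R2 $$ (c,0) + (\<Sum>l<m. R2 $$ (r,Suc l) * \<mu> (Suc l) * R2 $$ (c,Suc l))"
      unfolding n_def by (rule sum.lessThan_Suc_shift)
    also have "\<dots> = C $$ (r,c)"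
    proof (cases r)
      case 0
      then show ?thesis using rc C0[of c] Csym[of 0 c] n by (simp add: R2_def n_def \<mu>_def)
    next
      case (Suc a)
      show ?thesis
      proof (cases c)
        case 0
        then show ?thesis using rc Suc C0[of r] by (simp add: R2_def n_def \<mu>_def)
      next
        case (Suc b)
        have "(\<Sum>l<m. R2 $$ (r,Suc l) * \<mu> (Suc l) * R2 $$ (c,Suc l)) = (\<Sum>l<m. R1 $$ (a,l) * \<mu>1 l * R1 $$ (b,l))"
          by (intro sum.cong refl) (use rc \<open>r = Suc a\<close> Suc in \<open>simp add: R2_def n_def \<mu>_def\<close>)
        also have "\<dots> = B $$ (a,b)" using e1(3)[of a b] rc \<open>r = Suc a\<close> Suc unfolding n_def by simp
        also have "\<dots> = C $$ (r,c)" using rc \<open>r = Suc a\<close> Suc unfolding B_def n_def by simp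
        finally show ?thesis using rc \<open>r = Suc a\<close> Suc by (simp add: R2_def n_def)
      qed
    qed
    finally show "C $$ (r,c) = (R2 * diag_m n \<mu> * transpose_mat R2) $$ (r,c)" by simp
  qed (use R2c Cc in auto)
  define R where "R = H * R2"
  have Rc: "R \<in> carrier_mat n n" unfolding R_def using Hc R2c by simp
  have RT: "transpose_mat R = transpose_mat R2 * H"
    unfolding R_def using Hc R2c HT by (simp add: transpose_mult[of _ n n _ n])
  have R2Tc: "transpose_mat R2 \<in> carrier_mat n n" using R2c by simp
  have o1: "transpose_mat R * R = 1\<^sub>m n"
  proof -
    have "transpose_mat R * R = (transpose_mat R2 * H) * (H * R2)" by (simp only: RT) (simp add: R_def)
    also have "\<dots> = transpose_mat R2 * ((H * H) * R2)"
      using Hc R2c R2Tc by (simp add: assoc_mult_mat[of _ n n _ n _ n])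
    also have "\<dots> = 1\<^sub>m n" using HH R2T R2c by simp
    finally show ?thesis .
  qed
  have o2: "R * transpose_mat R = 1\<^sub>m n"
  proof -
    have "R * transpose_mat R = (H * R2) * (transpose_mat R2 * H)" by (simp only: RT) (simp add: R_def)
    also have "\<dots> = H * ((R2 * transpose_mat R2) * H)"
      using Hc R2c R2Tc by (simp add: assoc_mult_mat[of _ n n _ n _ n])
    also have "\<dots> = 1\<^sub>m n" using HH R2T2 Hc by simp
    finally show ?thesis .
  qed
  have AR: "A = R * diag_m n \<mu> * transpose_mat R"
  proof -
    have "R * diag_m n \<mu> * transpose_mat R = (H * R2) * diag_m n \<mu> * (transpose_mat R2 * H)"
      by (simp only: RT) (simp add: R_def)
    also have "\<dots> = H * (R2 * diag_m n \<mu> * transpose_mat R2) * H"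
      using Hc R2c R2Tc Dc by (simp add: assoc_mult_mat[of _ n n _ n _ n])
    also have "\<dots> = H * C * H" using CR2 by simp
    also have "\<dots> = (H * H) * A * (H * H)"
      unfolding C_def using Hc Ac by (simp add: assoc_mult_mat[of _ n n _ n _ n])
    also have "\<dots> = A" using HH Ac by simp
    finally show ?thesis by simp
  qed
  have "spec n A R \<mu>" unfolding spec_def ortho_def using Rc o1 o2 AR by blast
  then show ?case unfolding n_def by blast
qed



definition qf :: "nat \<Rightarrow> (nat \<Rightarrow> nat \<Rightarrow> real) \<Rightarrow> (nat \<Rightarrow> real) \<Rightarrow> real" where
  "qf n M x = (\<Sum>r<n. \<Sum>c<n. x r * M r c * x c)"

lemma qf_spec:
  assumes "\<And>r c. r < n \<Longrightarrow> c < n \<Longrightarrow> M r c = (\<Sum>l<n. R r l * \<mu> l * R c l)"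
  shows "qf n M x = (\<Sum>l<n. \<mu> l * (\<Sum>r<n. R r l * x r)^2)"
proof -
  have e: "x r * M r c * x c = (\<Sum>l<n. \<mu> l * (R r l * x r) * (R c l * x c))" if "r < n" "c < n" for r c
  proof -
    have "x r * M r c * x c = (\<Sum>l<n. x r * (R r l * \<mu> l * R c l) * x c)"
      using that by (simp only: assms sum_distrib_left sum_distrib_right)
    also have "\<dots> = (\<Sum>l<n. \<mu> l * (R r l * x r) * (R c l * x c))"
      by (intro sum.cong refl) (simp only: mult_ac)
    finally show ?thesis .
  qed
  have "qf n M x = (\<Sum>r<n. \<Sum>c<n. \<Sum>l<n. \<mu> l * (R r l * x r) * (R c l * x c))"
    unfolding qf_def by (intro sum.cong refl) (simp add: e)
  also have "\<dots> = (\<Sum>r<n. \<Sum>l<n. \<Sum>c<n. \<mu> l * (R r l * x r) * (R c l * x c))"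
    by (rule sum.cong[OF refl], rule sum.swap)
  also have "\<dots> = (\<Sum>l<n. \<Sum>r<n. \<Sum>c<n. \<mu> l * (R r l * x r) * (R c l * x c))"
    by (rule sum.swap)
  also have "\<dots> = (\<Sum>l<n. \<mu> l * (\<Sum>r<n. R r l * x r)^2)"
  proof (intro sum.cong refl)
    fix l
    have "\<mu> l * (\<Sum>r<n. R r l * x r)^2 = \<mu> l * ((\<Sum>r<n. R r l * x r) * (\<Sum>c<n. R c l * x c))"
      by (simp only: power2_eq_square)
    also have "\<dots> = \<mu> l * (\<Sum>r<n. \<Sum>c<n. (R r l * x r) * (R c l * x c))"
      by (simp only: sum_product)
    also have "\<dots> = (\<Sum>r<n. \<Sum>c<n. \<mu> l * (R r l * x r) * (R c l * x c))"
      by (simp only: sum_distrib_left mult.assoc)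
    finally show "(\<Sum>r<n. \<Sum>c<n. \<mu> l * (R r l * x r) * (R c l * x c)) = \<mu> l * (\<Sum>r<n. R r l * x r)^2" by simp
  qed
  finally show ?thesis .
qed

lemma qf_plus:
  assumes "i < n" "\<And>r c. r < n \<Longrightarrow> c < n \<Longrightarrow> M2 r c = M r c + (if r = i \<and> c = i then 1 else 0)"
  shows "qf n M2 x = qf n M x + (x i)^2"
proof -
  have "qf n M2 x = (\<Sum>r<n. \<Sum>c<n. x r * M r c * x c + (if r = i \<and> c = i then x i * x i else 0))"
    unfolding qf_def by (intro sum.cong refl) (auto simp: assms(2) algebra_simps)
  also have "\<dots> = qf n M x + (\<Sum>r<n. \<Sum>c<n. (if r = i \<and> c = i then x i * x i else 0))"
    unfolding qf_def by (simp add: sum.distrib)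
  also have "(\<Sum>r<n. \<Sum>c<n. (if r = i \<and> c = i then x i * x i else 0)) = (\<Sum>r<n. (if r = i then x i * x i else 0))"
    by (intro sum.cong refl) (use assms(1) in auto)
  also have "\<dots> = (x i)^2" using assms(1) by (simp add: power2_eq_square)
  finally show ?thesis .
qed

lemma coord:
  fixes Q :: "nat \<Rightarrow> nat \<Rightarrow> real" and n :: nat and J :: "nat set"
  assumes oQ: "\<And>l l'. l < n \<Longrightarrow> l' < n \<Longrightarrow> (\<Sum>r<n. Q r l * Q r l') = (if l = l' then 1 else 0)"
    and J: "J \<subseteq> {..<n}" and l: "l < n"
  shows "(\<Sum>r<n. Q r l * (\<Sum>j\<in>J. c j * Q r j)) = (if l \<in> J then c l else 0)"
proof -
  have fJ: "finite J" by (rule finite_subset[OF J]) simp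
  have "(\<Sum>r<n. Q r l * (\<Sum>j\<in>J. c j * Q r j)) = (\<Sum>j\<in>J. (\<Sum>r<n. Q r l * Q r j) * c j)"
    by (rule sum_swap_w)
  also have "\<dots> = (\<Sum>j\<in>J. if l = j then c j else 0)"
  proof (rule sum.cong[OF refl])
    fix j assume "j \<in> J"
    hence "j < n" using J by auto
    then show "(\<Sum>r<n. Q r l * Q r j) * c j = (if l = j then c j else 0)" using oQ[OF l \<open>j < n\<close>] by simp
  qed
  also have "\<dots> = (if l \<in> J then c l else 0)" using fJ by (subst sum.delta') auto
  finally show ?thesis .
qed

lemma qf_coord:
  fixes Q :: "nat \<Rightarrow> nat \<Rightarrow> real" and n :: nat and J :: "nat set"
  assumes hA: "\<And>r c. r < n \<Longrightarrow> c < n \<Longrightarrow> A r c = (\<Sum>l<n. Q r l * lam l * Q c l)"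
    and oQ: "\<And>l l'. l < n \<Longrightarrow> l' < n \<Longrightarrow> (\<Sum>r<n. Q r l * Q r l') = (if l = l' then 1 else 0)"
    and J: "J \<subseteq> {..<n}"
  shows "qf n A (\<lambda>r. \<Sum>j\<in>J. c j * Q r j) = (\<Sum>l\<in>J. lam l * (c l)^2)"
proof -
  have "qf n A (\<lambda>r. \<Sum>j\<in>J. c j * Q r j) = (\<Sum>l<n. lam l * (\<Sum>r<n. Q r l * (\<Sum>j\<in>J. c j * Q r j))^2)"
    by (rule qf_spec[OF hA])
  also have "\<dots> = (\<Sum>l<n. if l \<in> J then lam l * (c l)^2 else 0)"
    by (intro sum.cong refl) (simp add: coord[OF oQ J])
  also have "\<dots> = (\<Sum>l\<in>{..<n} \<inter> J. lam l * (c l)^2)"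
    by (rule sum.inter_restrict[symmetric]) simp
  also have "{..<n} \<inter> J = J" using J by blast
  finally show ?thesis .
qed



lemma part_card: "card {l. l < (n::nat) \<and> p l} + card {l. l < n \<and> \<not> p l} = n"
proof -
  have "card {l. l < n \<and> p l} + card {l. l < n \<and> \<not> p l} = card ({l. l < n \<and> p l} \<union> {l. l < n \<and> \<not> p l})"
    by (rule card_Un_disjoint[symmetric]) auto
  also have "{l. l < n \<and> p l} \<union> {l. l < n \<and> \<not> p l} = {..<n}" by auto
  finally show ?thesis by simp
qed

lemma type2:
  fixes Q :: "nat \<Rightarrow> nat \<Rightarrow> real" and c :: "nat \<Rightarrow> real"
  assumes fJ: "finite J" and jo: "jo \<notin> J" and q: "Q i jo \<noteq> 0"
    and c'_def: "c' = c(jo := - (\<Sum>j\<in>J. c j * Q i j) / Q i jo)"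
  shows "\<And>r. (\<Sum>j\<in>J. c j * (Q r j - Q i j / Q i jo * Q r jo)) = (\<Sum>j\<in>insert jo J. c' j * Q r j)"
    "(\<Sum>j\<in>insert jo J. c' j * Q i j) = 0"
    "\<And>j. j \<in> J \<Longrightarrow> c' j = c j"
proof -
  have cJ: "(\<Sum>j\<in>J. c' j * Q r j) = (\<Sum>j\<in>J. c j * Q r j)" for r
    by (intro sum.cong refl) (use jo in \<open>auto simp: c'_def\<close>)
  have ins: "(\<Sum>j\<in>insert jo J. c' j * Q r j) = c' jo * Q r jo + (\<Sum>j\<in>J. c j * Q r j)" for r
    using fJ jo cJ by simp
  show "\<And>r. (\<Sum>j\<in>J. c j * (Q r j - Q i j / Q i jo * Q r jo)) = (\<Sum>j\<in>insert jo J. c' j * Q r j)"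
  proof -
    fix r
    have "(\<Sum>j\<in>J. c j * (Q r j - Q i j / Q i jo * Q r jo)) = (\<Sum>j\<in>J. c j * Q r j) - (\<Sum>j\<in>J. c j * Q i j) / Q i jo * Q r jo"
    proof -
      have "(\<Sum>j\<in>J. c j * (Q r j - Q i j / Q i jo * Q r jo)) = (\<Sum>j\<in>J. c j * Q r j - c j * Q i j * (Q r jo / Q i jo))"
        by (intro sum.cong refl) (simp add: algebra_simps)
      also have "\<dots> = (\<Sum>j\<in>J. c j * Q r j) - (\<Sum>j\<in>J. c j * Q i j) * (Q r jo / Q i jo)"
        by (simp only: sum_subtractf sum_distrib_right)
      finally show ?thesis by simp
    qed
    also have "\<dots> = (\<Sum>j\<in>insert jo J. c' j * Q r j)" unfolding ins by (simp add: c'_def)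
    finally show "(\<Sum>j\<in>J. c j * (Q r j - Q i j / Q i jo * Q r jo)) = (\<Sum>j\<in>insert jo J. c' j * Q r j)" .
  qed
  show "(\<Sum>j\<in>insert jo J. c' j * Q i j) = 0" unfolding ins using q by (simp add: c'_def)
  show "\<And>j. j \<in> J \<Longrightarrow> c' j = c j" using jo by (auto simp: c'_def)
qed



lemma core:
  fixes A A2 Q R :: "nat \<Rightarrow> nat \<Rightarrow> real" and lam \<mu> :: "nat \<Rightarrow> real" and n i j0 :: nat
  assumes hA: "\<And>r c. r < n \<Longrightarrow> c < n \<Longrightarrow> A r c = (\<Sum>l<n. Q r l * lam l * Q c l)"
    and oQ: "\<And>l l'. l < n \<Longrightarrow> l' < n \<Longrightarrow> (\<Sum>r<n. Q r l * Q r l') = (if l = l' then 1 else 0)"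
    and hA2: "\<And>r c. r < n \<Longrightarrow> c < n \<Longrightarrow> A2 r c = (\<Sum>l<n. R r l * \<mu> l * R c l)"
    and oR: "\<And>r r'. r < n \<Longrightarrow> r' < n \<Longrightarrow> (\<Sum>l<n. R r l * R r' l) = (if r = r' then 1 else 0)"
    and h2: "\<And>r c. r < n \<Longrightarrow> c < n \<Longrightarrow> A2 r c = A r c + (if r = i \<and> c = i then 1 else 0)"
    and i: "i < n" and j0: "j0 < n" "lam j0 = 0" "Q i j0 \<noteq> 0"
  shows "card {l. l < n \<and> \<mu> l > 0} = card {l. l < n \<and> lam l > 0} + 1 \<and>
         card {l. l < n \<and> \<mu> l < 0} = card {l. l < n \<and> lam l < 0}"
proof -
  let ?P = "{l. l < n \<and> lam l > 0}"
  let ?N = "{l. l < n \<and> lam l < 0}"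
  let ?P' = "{l. l < n \<and> \<mu> l > 0}"
  let ?N' = "{l. l < n \<and> \<mu> l < 0}"
  have QF: "(\<Sum>l<n. \<mu> l * (\<Sum>r<n. R r l * x r)^2) = qf n A x + (x i)^2" for x :: "nat \<Rightarrow> real"
    using qf_spec[OF hA2, where x = x] qf_plus[OF i h2, where x = x] by simp
  have QFn: "(\<Sum>l<n. - \<mu> l * (\<Sum>r<n. R r l * x r)^2) = - (qf n A x + (x i)^2)" for x :: "nat \<Rightarrow> real"
    using QF[of x] by (simp add: sum_negf)
  have T1: "qf n A (\<lambda>r. \<Sum>j\<in>J. c j * Q r j) = (\<Sum>l\<in>J. lam l * (c l)^2)" if "J \<subseteq> {..<n}" for J c
    by (rule qf_coord[OF hA oQ that])
  have nzT1: "\<exists>r<n. (\<Sum>j\<in>J. c j * Q r j) \<noteq> 0" if J: "J \<subseteq> {..<n}" and j: "j \<in> J" "c j \<noteq> 0" for J c j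
  proof (rule ccontr)
    assume "\<not> ?thesis"
    hence z: "\<And>r. r < n \<Longrightarrow> (\<Sum>j\<in>J. c j * Q r j) = 0" by auto
    have "j < n" using J j by auto
    have "(\<Sum>r<n. Q r j * (\<Sum>j\<in>J. c j * Q r j)) = c j" using coord[OF oQ J \<open>j < n\<close>] j by simp
    moreover have "(\<Sum>r<n. Q r j * (\<Sum>j\<in>J. c j * Q r j)) = 0" using z by simp
    ultimately show False using j by simp
  qed
  have fin: "finite J" if "J \<subseteq> {..<n}" for J :: "nat set" by (rule finite_subset[OF that]) simp
  have s1: "card (insert j0 ?P) \<le> card ?P'"
  proof (rule key_low[where n=n and \<mu>=\<mu> and R=R and u="\<lambda>j r. Q r j"])
    show "finite (insert j0 ?P)" by simp
    fix c :: "nat \<Rightarrow> real" assume c: "\<exists>j\<in>insert j0 ?P. c j \<noteq> 0"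
    have J: "insert j0 ?P \<subseteq> {..<n}" using j0 by auto
    let ?x = "\<lambda>r. \<Sum>j\<in>insert j0 ?P. c j * Q r j"
    have "(\<Sum>l<n. \<mu> l * (\<Sum>r<n. R r l * ?x r)^2) = (\<Sum>l\<in>insert j0 ?P. lam l * (c l)^2) + (?x i)^2"
      unfolding QF T1[OF J] ..
    also have "(\<Sum>l\<in>insert j0 ?P. lam l * (c l)^2) = (\<Sum>l\<in>?P. lam l * (c l)^2)"
      using j0 by simp
    finally have eq: "(\<Sum>l<n. \<mu> l * (\<Sum>r<n. R r l * ?x r)^2) = (\<Sum>l\<in>?P. lam l * (c l)^2) + (?x i)^2" .
    have ge: "(\<Sum>l\<in>?P. lam l * (c l)^2) \<ge> 0" by (intro sum_nonneg) auto
    show "(\<Sum>l<n. \<mu> l * (\<Sum>r<n. R r l * ?x r)^2) > 0"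
    proof (cases "\<exists>j\<in>?P. c j \<noteq> 0")
      case True
      then obtain j where j: "j \<in> ?P" "c j \<noteq> 0" by blast
      have "(\<Sum>l\<in>?P. lam l * (c l)^2) > 0"
        by (rule sum_pos2[of _ j]) (use j in auto)
      then show ?thesis unfolding eq by (simp add: add_pos_nonneg)
    next
      case False
      hence cj0: "c j0 \<noteq> 0" using c by auto
      have "?x i = c j0 * Q i j0 + (\<Sum>j\<in>?P. c j * Q i j)" using j0 by simp
      also have "(\<Sum>j\<in>?P. c j * Q i j) = 0" using False by simp
      finally have "?x i \<noteq> 0" using cj0 j0 by simp
      then show ?thesis unfolding eq using ge by (simp add: add_nonneg_pos)
    qed
  qed
  have cP: "card (insert j0 ?P) = card ?P + 1" using j0 by simp
  let ?J2 = "{l. l < n \<and> lam l \<le> 0} - {j0}"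
  have s2: "card ?P' + card ?J2 \<le> n"
  proof (rule key_up[where n=n and R=R and \<mu>=\<mu> and u="\<lambda>j r. Q r j - Q i j / Q i j0 * Q r j0"])
    show "finite ?J2" by simp
    show "\<And>r r'. r < n \<Longrightarrow> r' < n \<Longrightarrow> (\<Sum>l<n. R r l * R r' l) = (if r = r' then 1 else 0)" by (rule oR)
    have J: "insert j0 ?J2 \<subseteq> {..<n}" using j0 by auto
    fix c :: "nat \<Rightarrow> real"
    define c' where "c' = c(j0 := - (\<Sum>j\<in>?J2. c j * Q i j) / Q i j0)"
    note t = type2[where J="?J2" and jo=j0 and Q=Q and i=i and c=c and c'=c', OF _ _ j0(3) c'_def]
    have t1: "\<And>r. (\<Sum>j\<in>?J2. c j * (Q r j - Q i j / Q i j0 * Q r j0)) = (\<Sum>j\<in>insert j0 ?J2. c' j * Q r j)"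
      by (rule t(1)) auto
    have t2: "(\<Sum>j\<in>insert j0 ?J2. c' j * Q i j) = 0" by (rule t(2)) auto
    have t3: "\<And>j. j \<in> ?J2 \<Longrightarrow> c' j = c j" by (rule t(3)) auto
    show "(\<exists>j\<in>?J2. c j \<noteq> 0) \<Longrightarrow> \<exists>r<n. (\<Sum>j\<in>?J2. c j * (Q r j - Q i j / Q i j0 * Q r j0)) \<noteq> 0"
    proof -
      assume "\<exists>j\<in>?J2. c j \<noteq> 0"
      then obtain j where j: "j \<in> ?J2" "c j \<noteq> 0" by blast
      have "\<exists>r<n. (\<Sum>j\<in>insert j0 ?J2. c' j * Q r j) \<noteq> 0"
        by (rule nzT1[OF J, of j]) (use j t3 in auto)
      then show ?thesis by (simp only: t1)
    qed
    have "(\<Sum>l<n. \<mu> l * (\<Sum>r<n. R r l * (\<Sum>j\<in>?J2. c j * (Q r j - Q i j / Q i j0 * Q r j0)))^2)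
       = (\<Sum>l\<in>insert j0 ?J2. lam l * (c' l)^2)"
      unfolding t1 QF T1[OF J] t2 by simp
    also have "\<dots> \<le> 0" by (intro sum_nonpos) (use j0 in \<open>auto simp: mult_nonpos_nonneg\<close>)
    finally show "(\<Sum>l<n. \<mu> l * (\<Sum>r<n. R r l * (\<Sum>j\<in>?J2. c j * (Q r j - Q i j / Q i j0 * Q r j0)))^2) \<le> 0" .
  qed
  have cJ2: "card ?J2 = n - card ?P - 1"
  proof -
    have "card {l. l < n \<and> lam l \<le> 0} = n - card ?P"
      using part_card[of n "\<lambda>l. lam l > 0"] by (simp add: not_less)
    moreover have "j0 \<in> {l. l < n \<and> lam l \<le> 0}" using j0 by simp
    ultimately show ?thesis by simp
  qed
  have s3: "card ?N \<le> card {l. l < n \<and> - \<mu> l > 0}"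
  proof (rule key_low[where n=n and \<mu>="\<lambda>l. - \<mu> l" and R=R and u="\<lambda>j r. Q r j - Q i j / Q i j0 * Q r j0"])
    show "finite ?N" by simp
    fix c :: "nat \<Rightarrow> real" assume c: "\<exists>j\<in>?N. c j \<noteq> 0"
    have J: "insert j0 ?N \<subseteq> {..<n}" using j0 by auto
    define c' where "c' = c(j0 := - (\<Sum>j\<in>?N. c j * Q i j) / Q i j0)"
    note t = type2[where J="?N" and jo=j0 and Q=Q and i=i and c=c and c'=c', OF _ _ j0(3) c'_def]
    have t1: "\<And>r. (\<Sum>j\<in>?N. c j * (Q r j - Q i j / Q i j0 * Q r j0)) = (\<Sum>j\<in>insert j0 ?N. c' j * Q r j)"
      by (rule t(1)) (use j0 in auto)
    have t2: "(\<Sum>j\<in>insert j0 ?N. c' j * Q i j) = 0" by (rule t(2)) (use j0 in auto)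
    have t3: "\<And>j. j \<in> ?N \<Longrightarrow> c' j = c j" by (rule t(3)) (use j0 in auto)
    have "(\<Sum>l<n. - \<mu> l * (\<Sum>r<n. R r l * (\<Sum>j\<in>?N. c j * (Q r j - Q i j / Q i j0 * Q r j0)))^2)
       = - (\<Sum>l\<in>insert j0 ?N. lam l * (c' l)^2)"
      unfolding t1 QFn T1[OF J] t2 by simp
    also have "(\<Sum>l\<in>insert j0 ?N. lam l * (c' l)^2) = (\<Sum>l\<in>?N. lam l * (c l)^2)"
      using j0 t3 by simp
    finally have eqX: "(\<Sum>l<n. - \<mu> l * (\<Sum>r<n. R r l * (\<Sum>j\<in>?N. c j * (Q r j - Q i j / Q i j0 * Q r j0)))^2)
       = - (\<Sum>l\<in>?N. lam l * (c l)^2)" .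
    obtain j where j: "j \<in> ?N" "c j \<noteq> 0" using c by blast
    have "(\<Sum>l\<in>?N. - (lam l * (c l)^2)) > 0"
      by (rule sum_pos2[of _ j]) (use j in \<open>auto simp: mult_nonpos_nonneg mult_neg_pos\<close>)
    then show "(\<Sum>l<n. - \<mu> l * (\<Sum>r<n. R r l * (\<Sum>j\<in>?N. c j * (Q r j - Q i j / Q i j0 * Q r j0)))^2) > 0"
      unfolding eqX by (simp add: sum_negf)
  qed
  let ?J4 = "{l. l < n \<and> lam l \<ge> 0}"
  have s4: "card {l. l < n \<and> - \<mu> l > 0} + card ?J4 \<le> n"
  proof (rule key_up[where n=n and R=R and u="\<lambda>j r. Q r j" and \<mu>="\<lambda>l. - \<mu> l"])
    show "finite ?J4" by simp
    show "\<And>r r'. r < n \<Longrightarrow> r' < n \<Longrightarrow> (\<Sum>l<n. R r l * R r' l) = (if r = r' then 1 else 0)" by (rule oR)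
    have J: "?J4 \<subseteq> {..<n}" by auto
    fix c :: "nat \<Rightarrow> real"
    show "(\<exists>j\<in>?J4. c j \<noteq> 0) \<Longrightarrow> \<exists>r<n. (\<Sum>j\<in>?J4. c j * Q r j) \<noteq> 0"
      using nzT1[OF J] by blast
    have "(\<Sum>l<n. - \<mu> l * (\<Sum>r<n. R r l * (\<Sum>j\<in>?J4. c j * Q r j))^2)
       = - ((\<Sum>l\<in>?J4. lam l * (c l)^2) + (\<Sum>j\<in>?J4. c j * Q i j)^2)"
      unfolding QFn T1[OF J] ..
    also have "\<dots> \<le> 0"
    proof -
      have "(\<Sum>l\<in>?J4. lam l * (c l)^2) \<ge> 0" by (intro sum_nonneg) auto
      moreover have "(\<Sum>j\<in>?J4. c j * Q i j)^2 \<ge> 0" by simp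
      ultimately show ?thesis by linarith
    qed
    finally show "(\<Sum>l<n. - \<mu> l * (\<Sum>r<n. R r l * (\<Sum>j\<in>?J4. c j * Q r j))^2) \<le> 0" .
  qed
  have cJ4: "card ?J4 = n - card ?N"
    using part_card[of n "\<lambda>l. lam l < 0"] by (simp add: not_less)
  have NN: "{l. l < n \<and> - \<mu> l > 0} = ?N'" by auto
  have cPN: "card ?P + card ?N \<le> n"
  proof -
    have "card ?P + card ?N = card (?P \<union> ?N)" by (rule card_Un_disjoint[symmetric]) auto
    also have "\<dots> \<le> card {..<n}" by (rule card_mono) auto
    finally show ?thesis by simp
  qed
  show ?thesis using s1 cP s2 cJ2 s3 s4 cJ4 NN cPN j0 by auto
qed



definition pert :: "nat \<Rightarrow> real mat \<Rightarrow> nat \<Rightarrow> real \<Rightarrow> real mat" where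
  "pert n A i s = mat n n (\<lambda>(r,c). A $$ (r,c) + (if r = i \<and> c = i then s else 0))"

lemma pert_SG:
  assumes "A \<in> S_G n E" "i < n"
  shows "pert n A i s \<in> S_G n E"
proof -
  from assms have Ac: "A \<in> carrier_mat n n" and AT: "transpose_mat A = A"
    and ed: "\<And>r c. r < n \<Longrightarrow> c < n \<Longrightarrow> r \<noteq> c \<Longrightarrow> (A $$ (r,c) \<noteq> 0 \<longleftrightarrow> E r c)"
    unfolding S_G_def sym_mat_def by auto
  have sym: "A $$ (r,c) = A $$ (c,r)" if "r < n" "c < n" for r c
    using AT that Ac by (metis carrier_matD(1,2) index_transpose_mat(1))
  have "transpose_mat (pert n A i s) = pert n A i s"
    unfolding pert_def by (intro eq_matI) (auto simp: sym)
  moreover have "pert n A i s \<in> carrier_mat n n" unfolding pert_def by simp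
  moreover have "\<forall>r<n. \<forall>c<n. r \<noteq> c \<longrightarrow> (pert n A i s $$ (r,c) \<noteq> 0 \<longleftrightarrow> E r c)"
    unfolding pert_def using ed by auto
  ultimately show ?thesis unfolding S_G_def sym_mat_def by auto
qed

lemma pert_SAP:
  fixes A :: "real mat" and v :: "nat \<Rightarrow> real"
  assumes Ac: "A \<in> carrier_mat n n" and sym: "\<And>r c. r < n \<Longrightarrow> c < n \<Longrightarrow> A $$ (r,c) = A $$ (c,r)"
    and sap: "SAP n A" and Av: "\<And>r. r < n \<Longrightarrow> (\<Sum>c<n. A $$ (r,c) * v c) = 0"
    and i: "i < n" and vi: "v i \<noteq> 0" and s: "s \<noteq> 0"
  shows "SAP n (pert n A i s)"
  unfolding SAP_def
proof (intro allI impI)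
  fix X assume h: "sym_mat n X \<and> pert n A i s \<circ>\<^sub>H X = 0\<^sub>m n n \<and> 1\<^sub>m n \<circ>\<^sub>H X = 0\<^sub>m n n \<and> pert n A i s * X = 0\<^sub>m n n"
  let ?A2 = "pert n A i s"
  have A2c: "?A2 \<in> carrier_mat n n" unfolding pert_def by simp
  have Xc: "X \<in> carrier_mat n n" using h unfolding sym_mat_def by auto
  have diag: "X $$ (r,r) = 0" if "r < n" for r
  proof -
    have "(1\<^sub>m n \<circ>\<^sub>H X) $$ (r,r) = 0" using h that by simp
    then show ?thesis using that Xc unfolding hadamard_def by simp
  qed
  have had: "A $$ (r,c) * X $$ (r,c) = 0" if "r < n" "c < n" for r c
  proof -
    have "(?A2 \<circ>\<^sub>H X) $$ (r,c) = 0" using h that by simp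
    hence "?A2 $$ (r,c) * X $$ (r,c) = 0" using that A2c unfolding hadamard_def by simp
    then show ?thesis using that diag[of i] unfolding pert_def by (auto split: if_splits)
  qed
  have prod: "(\<Sum>k<n. A $$ (r,k) * X $$ (k,c)) + (if r = i then s * X $$ (i,c) else 0) = 0"
    if r: "r < n" and c: "c < n" for r c
  proof -
    have "(?A2 * X) $$ (r,c) = 0" using h r c by simp
    moreover have "(?A2 * X) $$ (r,c) = (\<Sum>k<n. ?A2 $$ (r,k) * X $$ (k,c))" by (rule mult_entry[OF A2c Xc r c])
    moreover have "(\<Sum>k<n. ?A2 $$ (r,k) * X $$ (k,c)) = (\<Sum>k<n. A $$ (r,k) * X $$ (k,c) + (if r = i \<and> k = i then s * X $$ (i,c) else 0))"
      by (intro sum.cong refl) (use r in \<open>auto simp: pert_def algebra_simps\<close>)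
    moreover have "\<dots> = (\<Sum>k<n. A $$ (r,k) * X $$ (k,c)) + (if r = i then s * X $$ (i,c) else 0)"
      using i by (simp add: sum.distrib)
    ultimately show ?thesis by simp
  qed
  have rowi: "X $$ (i,c) = 0" if c: "c < n" for c
  proof -
    have "(\<Sum>r<n. v r * ((\<Sum>k<n. A $$ (r,k) * X $$ (k,c)) + (if r = i then s * X $$ (i,c) else 0))) = 0"
      using prod[OF _ c] by simp
    moreover have "(\<Sum>r<n. v r * ((\<Sum>k<n. A $$ (r,k) * X $$ (k,c)) + (if r = i then s * X $$ (i,c) else 0)))
       = (\<Sum>r<n. \<Sum>k<n. v r * A $$ (r,k) * X $$ (k,c)) + v i * s * X $$ (i,c)"
    proof -
      let ?S = "\<lambda>r. \<Sum>k<n. A $$ (r,k) * X $$ (k,c)"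
      let ?t = "s * X $$ (i,c)"
      have "(\<Sum>r<n. v r * (?S r + (if r = i then ?t else 0))) = (\<Sum>r<n. v r * ?S r + (if r = i then v r * ?t else 0))"
        by (intro sum.cong refl) (simp add: algebra_simps)
      also have "\<dots> = (\<Sum>r<n. v r * ?S r) + (\<Sum>r<n. (if r = i then v r * ?t else 0))"
        by (rule sum.distrib)
      also have "(\<Sum>r<n. (if r = i then v r * ?t else 0)) = v i * ?t" by (subst sum.delta) (use i in auto)
      also have "(\<Sum>r<n. v r * ?S r) = (\<Sum>r<n. \<Sum>k<n. v r * A $$ (r,k) * X $$ (k,c))"
        by (simp add: sum_distrib_left mult_ac)
      finally show ?thesis by (simp add: mult_ac)
    qed
    moreover have "(\<Sum>r<n. \<Sum>k<n. v r * A $$ (r,k) * X $$ (k,c)) = 0"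
    proof -
      have "(\<Sum>r<n. \<Sum>k<n. v r * A $$ (r,k) * X $$ (k,c)) = (\<Sum>k<n. \<Sum>r<n. v r * A $$ (r,k) * X $$ (k,c))"
        by (rule sum.swap)
      also have "\<dots> = (\<Sum>k<n. (\<Sum>r<n. A $$ (k,r) * v r) * X $$ (k,c))"
      proof (rule sum.cong[OF refl])
        fix k assume k: "k \<in> {..<n}"
        have "(\<Sum>r<n. v r * A $$ (r,k) * X $$ (k,c)) = (\<Sum>r<n. A $$ (k,r) * v r * X $$ (k,c))"
        proof (rule sum.cong[OF refl])
          fix r assume r: "r \<in> {..<n}"
          show "v r * A $$ (r,k) * X $$ (k,c) = A $$ (k,r) * v r * X $$ (k,c)" using sym[of r k] r k by simp
        qed
        then show "(\<Sum>r<n. v r * A $$ (r,k) * X $$ (k,c)) = (\<Sum>r<n. A $$ (k,r) * v r) * X $$ (k,c)"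
          by (simp add: sum_distrib_right)
      qed
      also have "\<dots> = 0" by (simp add: Av)
      finally show ?thesis .
    qed
    ultimately have "v i * s * X $$ (i,c) = 0" by simp
    then show ?thesis using vi s by simp
  qed
  have "A \<circ>\<^sub>H X = 0\<^sub>m n n"
    by (intro eq_matI) (use Ac had in \<open>auto simp: hadamard_def\<close>)
  moreover have "A * X = 0\<^sub>m n n"
  proof (intro eq_matI)
    fix r c assume "r < dim_row (0\<^sub>m n n :: real mat)" "c < dim_col (0\<^sub>m n n :: real mat)"
    hence r: "r < n" and c: "c < n" by auto
    have "(A * X) $$ (r,c) = (\<Sum>k<n. A $$ (r,k) * X $$ (k,c))" by (rule mult_entry[OF Ac Xc r c])
    also have "\<dots> = 0" using prod[OF r c] rowi[OF c] by (cases "r = i") auto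
    finally show "(A * X) $$ (r,c) = 0\<^sub>m n n $$ (r,c)" using r c by simp
  qed (use Ac Xc in auto)
  moreover have "1\<^sub>m n \<circ>\<^sub>H X = 0\<^sub>m n n" using h by simp
  moreover have "sym_mat n X" using h by simp
  ultimately show "X = 0\<^sub>m n n" using sap unfolding SAP_def by blast
qed



theorem corollary3p5:
  fixes n a b :: nat and E :: "nat \<Rightarrow> nat \<Rightarrow> bool" and A :: "real mat"
  assumes "simple_graph_on n E"
    and "A \<in> S_G n E" and "SAP n A"
    and "pin A = (a, b)" and "a + b < n"
  shows "(\<exists>A' \<in> S_G n E. SAP n A' \<and> pin A' = (a + 1, b))
       \<and> (\<exists>A' \<in> S_G n E. SAP n A' \<and> pin A' = (a, b + 1))"
proof -
  have Ac: "A \<in> carrier_mat n n" and AT: "transpose_mat A = A"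
    using assms(2) unfolding S_G_def sym_mat_def by auto
  have sym: "A $$ (r,c) = A $$ (c,r)" if "r < n" "c < n" for r c
    using AT that Ac by (metis carrier_matD(1,2) index_transpose_mat(1))
  from spectral[OF Ac sym] obtain Q lam where sp: "spec n A Q lam" by blast
  note eQ = spec_entries[OF sp]
  have a: "a = card {l. l < n \<and> lam l > 0}" and b: "b = card {l. l < n \<and> lam l < 0}"
    using assms(4) spec_n_plus[OF sp] spec_n_minus[OF sp] unfolding pin_def by auto
  obtain j0 where j0: "j0 < n" "lam j0 = 0"
  proof (rule ccontr)
    assume "\<not> thesis"
    hence nz: "\<And>l. l < n \<Longrightarrow> lam l \<noteq> 0" using that by blast
    have "{l. l < n \<and> \<not> lam l > 0} = {l. l < n \<and> lam l < 0}" using nz by force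
    hence "a + b = n" using part_card[of n "\<lambda>l. lam l > 0"] a b by simp
    then show False using assms(5) by simp
  qed
  obtain i where i: "i < n" "Q $$ (i,j0) \<noteq> 0"
  proof (rule ccontr)
    assume "\<not> thesis"
    hence "\<And>r. r < n \<Longrightarrow> Q $$ (r,j0) = 0" using that by blast
    hence "(\<Sum>r<n. Q $$ (r,j0) * Q $$ (r,j0)) = 0" by simp
    then show False using eQ(4)[OF j0(1) j0(1)] by simp
  qed
  have Av: "(\<Sum>c<n. A $$ (r,c) * Q $$ (c,j0)) = 0" if r: "r < n" for r
  proof -
    have "(\<Sum>c<n. A $$ (r,c) * Q $$ (c,j0)) = (\<Sum>c<n. \<Sum>l<n. Q $$ (r,l) * lam l * (Q $$ (c,l) * Q $$ (c,j0)))"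
      by (intro sum.cong refl) (simp add: eQ(3)[OF r] sum_distrib_right sum_distrib_left mult_ac)
    also have "\<dots> = (\<Sum>l<n. \<Sum>c<n. Q $$ (r,l) * lam l * (Q $$ (c,l) * Q $$ (c,j0)))" by (rule sum.swap)
    also have "\<dots> = (\<Sum>l<n. Q $$ (r,l) * lam l * (\<Sum>c<n. Q $$ (c,l) * Q $$ (c,j0)))"
      by (simp add: sum_distrib_left)
    also have "\<dots> = (\<Sum>l<n. if l = j0 then Q $$ (r,l) * lam l else 0)"
      by (intro sum.cong refl) (simp add: eQ(4) j0)
    also have "\<dots> = 0" using j0 by simp
    finally show ?thesis .
  qed
  have SAPp: "SAP n (pert n A i s)" if "s \<noteq> 0" for s
    by (rule pert_SAP[OF Ac sym assms(3) Av i(1) _ that]) (use i in auto)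
  have SGp: "pert n A i s \<in> S_G n E" for s by (rule pert_SG[OF assms(2) i(1)])
  have symp: "pert n A i s $$ (r,c) = pert n A i s $$ (c,r)" if "r < n" "c < n" for r c s
    using that sym[of r c] unfolding pert_def by auto
  have pc: "pert n A i s \<in> carrier_mat n n" for s unfolding pert_def by simp
  from spectral[OF pc symp] obtain R \<mu> where sp1: "spec n (pert n A i 1) R \<mu>" by blast
  note eR = spec_entries[OF sp1]
  have h1: "\<And>r c. r < n \<Longrightarrow> c < n \<Longrightarrow> pert n A i 1 $$ (r,c) = A $$ (r,c) + (if r = i \<and> c = i then 1 else 0)"
    unfolding pert_def by simp
  have c1: "card {l. l < n \<and> \<mu> l > 0} = card {l. l < n \<and> lam l > 0} + 1 \<and>
         card {l. l < n \<and> \<mu> l < 0} = card {l. l < n \<and> lam l < 0}"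
    by (rule core[of n "\<lambda>r c. A $$ (r,c)" "\<lambda>r l. Q $$ (r,l)" lam "\<lambda>r c. pert n A i 1 $$ (r,c)"
        "\<lambda>r l. R $$ (r,l)" \<mu> i j0, OF eQ(3) eQ(4) eR(3) eR(5) h1 i(1) j0 i(2)])
  have pin1: "pin (pert n A i 1) = (a + 1, b)"
    using c1 a b spec_n_plus[OF sp1] spec_n_minus[OF sp1] unfolding pin_def by simp
  from spectral[OF pc symp] obtain R2 \<mu>2 where sp2: "spec n (pert n A i (-1)) R2 \<mu>2" by blast
  note eR2 = spec_entries[OF sp2]
  have h2: "\<And>r c. r < n \<Longrightarrow> c < n \<Longrightarrow> - pert n A i (-1) $$ (r,c) = - A $$ (r,c) + (if r = i \<and> c = i then 1 else 0)"
    unfolding pert_def by simp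
  have nA: "\<And>r c. r < n \<Longrightarrow> c < n \<Longrightarrow> - A $$ (r,c) = (\<Sum>l<n. Q $$ (r,l) * - lam l * Q $$ (c,l))"
    using eQ(3) by (simp add: sum_negf)
  have nA2: "\<And>r c. r < n \<Longrightarrow> c < n \<Longrightarrow> - pert n A i (-1) $$ (r,c) = (\<Sum>l<n. R2 $$ (r,l) * - \<mu>2 l * R2 $$ (c,l))"
    using eR2(3) by (simp add: sum_negf)
  have j0n: "- lam j0 = 0" using j0 by simp
  have c2: "card {l. l < n \<and> - \<mu>2 l > 0} = card {l. l < n \<and> - lam l > 0} + 1 \<and>
         card {l. l < n \<and> - \<mu>2 l < 0} = card {l. l < n \<and> - lam l < 0}"
    by (rule core[of n "\<lambda>r c. - A $$ (r,c)" "\<lambda>r l. Q $$ (r,l)" "\<lambda>l. - lam l"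
        "\<lambda>r c. - pert n A i (-1) $$ (r,c)" "\<lambda>r l. R2 $$ (r,l)" "\<lambda>l. - \<mu>2 l" i j0,
        OF nA eQ(4) nA2 eR2(5) h2 i(1) j0(1) j0n i(2)])
  have s1: "{l. l < n \<and> - \<mu>2 l > 0} = {l. l < n \<and> \<mu>2 l < 0}" by auto
  have s2: "{l. l < n \<and> - \<mu>2 l < 0} = {l. l < n \<and> \<mu>2 l > 0}" by auto
  have s3: "{l. l < n \<and> - lam l > 0} = {l. l < n \<and> lam l < 0}" by auto
  have s4: "{l. l < n \<and> - lam l < 0} = {l. l < n \<and> lam l > 0}" by auto
  have pin2: "pin (pert n A i (-1)) = (a, b + 1)"
    using c2 unfolding s1 s2 s3 s4 pin_def spec_n_plus[OF sp2] spec_n_minus[OF sp2] a b by simp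
  have sa1: "SAP n (pert n A i 1)" by (rule SAPp) simp
  have sa2: "SAP n (pert n A i (-1))" by (rule SAPp) simp
  show ?thesis
  proof (intro conjI)
    show "\<exists>A' \<in> S_G n E. SAP n A' \<and> pin A' = (a + 1, b)"
      using SGp[of 1] sa1 pin1 by blast
    show "\<exists>A' \<in> S_G n E. SAP n A' \<and> pin A' = (a, b + 1)"
      using SGp[of "-1"] sa2 pin2 by blast
  qed
qed


end
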